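(* Let $X$ be a topological space, let $\rho:\mathcal{F}\to[\Psi]^\omega$ be a partition regular function, and let $x:\Psi\to X$ be a sequence. Then \[ \Lambda_x(\mathcal{I}_\rho)\subseteq\Lambda_x(\rho)\subseteq\Gamma_x(\rho). \]
   Context: Let $\Omega,\Psi$ be countably infinite sets, $[\Psi]^\omega$ the family of infinite subsets of $\Psi$, and $\mathcal{F}\subseteq[\Omega]^\omega$ a nonempty family with $A\setminus K\in\mathcal{F}$ for all $A\in\mathcal{F}$ and finite $K\subseteq\Omega$. A function $\rho:\mathcal{F}\to[\Psi]^\omega$ is partition regular if: (M) $E\subseteq F$ in $\mathcal{F}$ implies $\rho(E)\subseteq\rho(F)$; (R) for every $F\in\mathcal{F}$ and $A,B\subseteq\Psi$ with $\rho(F)=A\cup B$ there is $E\in\mathcal{F}$ with $\rho(E)\subseteq A$ or $\rho(E)\subseteq B$; (S) for every $F\in\mathcal{F}$ there is $E\subseteq F$, $E\in\mathcal{F}$, such that for every $a\in\rho(E)$ there is a finite $K\subseteq\Omega$ with $a\notin\rho(E\setminus K)$. $\mathcal{I}_\rho=\{S\subseteq\Psi:\forall F\in\mathcal{F}\ \rho(F)\not\subseteq S\}$ (an ideal on $\Psi$), and $\mathcal{I}_\rho^+=\mathcal{P}(\Psi)\setminus\mathcal{I}_\rho$. $\Gamma_x(\rho)$ ($\rho$-cluster points) is the set of $\eta\in X$ such that for every neighborhood $U$ of $\eta$ there is $F\in\mathcal{F}$ with $\rho(F)\subseteq\{s\in\Psi:x_s\in U\}$. $\Lambda_x(\rho)$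 ($\rho$-limit points) is the set of $\eta\in X$ for which there is $F\in\mathcal{F}$ such that for every neighborhood $U$ of $\eta$ there is a finite $K\subseteq\Omega$ with $x_s\in U$ for all $s\in\rho(F\setminus K)$. $\Lambda_x(\mathcal{I}_\rho)$ is the set of $\eta\in X$ for which there is $S\in\mathcal{I}_\rho^+$ such that the subsequence $(x_s)_{s\in S}$ converges to $\eta$ in the ordinary sense (for each neighborhood $U$ of $\eta$, $x_s\in U$ for all but finitely many $s\in S$). *)

theory Defs
  imports Complex_Main "HOL-Library.Countable_Set"
begin

definition admissible_family :: "'o set set \<Rightarrow> bool" where
  "admissible_family FF \<longleftrightarrow>
     FF \<noteq> {} \<and> (\<forall>A\<in>FF. infinite A) \<and> (\<forall>A\<in>FF. \<forall>K. finite K \<longrightarrow> A - K \<in> FF)"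

definition partition_regular :: "'o set set \<Rightarrow> ('o set \<Rightarrow> 'p set) \<Rightarrow> bool" where
  "partition_regular FF rho \<longleftrightarrow>
     admissible_family FF \<and>
     (\<forall>F\<in>FF. infinite (rho F)) \<and>
     (\<forall>E\<in>FF. \<forall>F\<in>FF. E \<subseteq> F \<longrightarrow> rho E \<subseteq> rho F) \<and>
     (\<forall>F\<in>FF. \<forall>A B. rho F = A \<union> B \<longrightarrow> (\<exists>E\<in>FF. rho E \<subseteq> A \<or> rho E \<subseteq> B)) \<and>
     (\<forall>F\<in>FF. \<exists>E\<in>FF. E \<subseteq> F \<and>
        (\<forall>a\<in>rho E. \<exists>K. finite K \<and> a \<notin> rho (E - K)))"

definition rho_ideal :: "'o set set \<Rightarrow> ('o set \<Rightarrow> 'p set) \<Rightarrow> 'p set set" where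
  "rho_ideal FF rho = {S. \<forall>F\<in>FF. \<not> rho F \<subseteq> S}"

definition rho_positive :: "'o set set \<Rightarrow> ('o set \<Rightarrow> 'p set) \<Rightarrow> 'p set set" where
  "rho_positive FF rho = UNIV - rho_ideal FF rho"

definition rho_cluster_points ::
  "'o set set \<Rightarrow> ('o set \<Rightarrow> 'p set) \<Rightarrow> ('p \<Rightarrow> 'x::topological_space) \<Rightarrow> 'x set" where
  "rho_cluster_points FF rho x =
     {\<eta>. \<forall>U. open U \<and> \<eta> \<in> U \<longrightarrow> (\<exists>F\<in>FF. rho F \<subseteq> {s. x s \<in> U})}"

definition rho_limit_points ::
  "'o set set \<Rightarrow> ('o set \<Rightarrow> 'p set) \<Rightarrow> ('p \<Rightarrow> 'x::topological_space) \<Rightarrow> 'x set" where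
  "rho_limit_points FF rho x =
     {\<eta>. \<exists>F\<in>FF. \<forall>U. open U \<and> \<eta> \<in> U \<longrightarrow>
            (\<exists>K. finite K \<and> (\<forall>s\<in>rho (F - K). x s \<in> U))}"

definition ideal_limit_points ::
  "'o set set \<Rightarrow> ('o set \<Rightarrow> 'p set) \<Rightarrow> ('p \<Rightarrow> 'x::topological_space) \<Rightarrow> 'x set" where
  "ideal_limit_points FF rho x =
     {\<eta>. \<exists>S\<in>rho_positive FF rho. \<forall>U. open U \<and> \<eta> \<in> U \<longrightarrow> finite {s\<in>S. x s \<notin> U}}"

end

theory Submission
  imports Defs
begin

theorem proposition2p4:
  fixes FF :: "'o set set" and rho :: "'o set \<Rightarrow> 'p set"
    and x :: "'p \<Rightarrow> 'x::topological_space"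
  assumes "countable (UNIV :: 'o set)" and "infinite (UNIV :: 'o set)"
    and "countable (UNIV :: 'p set)" and "infinite (UNIV :: 'p set)"
    and "partition_regular FF rho"
  shows "ideal_limit_points FF rho x \<subseteq> rho_limit_points FF rho x \<and>
         rho_limit_points FF rho x \<subseteq> rho_cluster_points FF rho x"
proof
  have adm: "\<And>A K. A \<in> FF \<Longrightarrow> finite K \<Longrightarrow> A - K \<in> FF"
    using assms(5) by (simp add: partition_regular_def admissible_family_def)
  have mono: "\<And>E F. E \<in> FF \<Longrightarrow> F \<in> FF \<Longrightarrow> E \<subseteq> F \<Longrightarrow> rho E \<subseteq> rho F"
    using assms(5) by (simp add: partition_regular_def)
  have S: "\<And>F. F \<in> FF \<Longrightarrow> \<exists>E\<in>FF. E \<subseteq> F \<and> (\<forall>a\<in>rho E. \<exists>K. finite K \<and> a \<notin> rho (E - K))"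
    using assms(5) by (simp add: partition_regular_def)
  show "ideal_limit_points FF rho x \<subseteq> rho_limit_points FF rho x"
  proof
    fix \<eta> assume "\<eta> \<in> ideal_limit_points FF rho x"
    then obtain T where T: "T \<in> rho_positive FF rho"
      and conv: "\<And>U. open U \<Longrightarrow> \<eta> \<in> U \<Longrightarrow> finite {s\<in>T. x s \<notin> U}"
      unfolding ideal_limit_points_def by blast
    from T obtain F0 where F0: "F0 \<in> FF" "rho F0 \<subseteq> T"
      unfolding rho_positive_def rho_ideal_def by blast
    from S[OF F0(1)] obtain E where E: "E \<in> FF" "E \<subseteq> F0"
      and Ek: "\<forall>a\<in>rho E. \<exists>K. finite K \<and> a \<notin> rho (E - K)" by blast
    from bchoice[OF Ek] obtain KK where KK: "\<And>a. a \<in> rho E \<Longrightarrow> finite (KK a) \<and> a \<notin> rho (E - KK a)"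
      by blast
    have "\<exists>K. finite K \<and> (\<forall>s\<in>rho (E - K). x s \<in> U)" if U: "open U" "\<eta> \<in> U" for U
    proof -
      let ?B = "{s\<in>T. x s \<notin> U} \<inter> rho E"
      have fB: "finite ?B" using conv[OF U] by simp
      let ?K = "\<Union>a\<in>?B. KK a"
      have fK: "finite ?K" using fB KK by (intro finite_UN_I) auto
      have "x s \<in> U" if s: "s \<in> rho (E - ?K)" for s
      proof (rule ccontr)
        assume nU: "x s \<notin> U"
        have sE: "s \<in> rho E" using mono[OF adm[OF E(1) fK] E(1)] s by blast
        have "s \<in> T" using sE mono[OF E(1) F0(1) E(2)] F0(2) by blast
        hence sB: "s \<in> ?B" using nU sE by blast
        have "E - ?K \<subseteq> E - KK s" using sB by blast
        hence "rho (E - ?K) \<subseteq> rho (E - KK s)"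
          using mono[OF adm[OF E(1) fK] adm[OF E(1)]] KK[OF sE] by blast
        thus False using s KK[OF sE] by blast
      qed
      thus ?thesis using fK by blast
    qed
    thus "\<eta> \<in> rho_limit_points FF rho x"
      unfolding rho_limit_points_def using E(1) by blast
  qed
  show "rho_limit_points FF rho x \<subseteq> rho_cluster_points FF rho x"
  proof
    fix \<eta> assume "\<eta> \<in> rho_limit_points FF rho x"
    then obtain F where F: "F \<in> FF" and
      h: "\<And>U. open U \<Longrightarrow> \<eta> \<in> U \<Longrightarrow> \<exists>K. finite K \<and> (\<forall>s\<in>rho (F - K). x s \<in> U)"
      unfolding rho_limit_points_def by blast
    show "\<eta> \<in> rho_cluster_points FF rho x"
      unfolding rho_cluster_points_def
    proof (intro CollectI allI impI)
      fix U assume "open U \<and> \<eta> \<in> U"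
      then obtain K where "finite K" "\<forall>s\<in>rho (F - K). x s \<in> U" using h by blast
      thus "\<exists>F\<in>FF. rho F \<subseteq> {s. x s \<in> U}" using adm[OF F] by blast
    qed
  qed
qed

end
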